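(* Let $(\mathcal{A},\varphi)$ be a unital algebra with a linear functional $\varphi$, $\varphi(\mathbf 1)=1$. For all $n\in\mathbb{N}_+$, $k\in[n]$ and $a_1,\dots,a_{n+1}\in\mathcal{A}$, $$\kappa^*_{n+1}(a_1,\dots,a_{n+1})=\kappa^*_n(a_1,\dots,a_{k-1},a_ka_{k+1},a_{k+2},\dots,a_{n+1})-\kappa^*_k(a_1,\dots,a_k)\,\kappa^*_{n+1-k}(a_{k+1},\dots,a_{n+1}).$$ Moreover, if $\mathcal{A}=B(\mathcal H)$ for a Hilbert space $\mathcal H$ and $\varphi(a)=\langle a\xi,\xi\rangle$ for a unit vector $\xi$, then $\kappa^*_n(a_1,\dots,a_n)=\varphi(a_1P^\perp a_2P^\perp\cdots P^\perp a_n)$, where $P^\perp$ is the orthogonal projection onto $(\mathbb{C}\xi)^\perp$.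
   Context: The multilinear functionals $\kappa^*_n$ are defined recursively by $\kappa^*_1(a)=\varphi(a)$ and $\kappa^*_{n+1}(a_1,\dots,a_{n+1})=\kappa^*_n(a_1a_2,a_3,\dots,a_{n+1})-\varphi(a_1)\kappa^*_n(a_2,\dots,a_{n+1})$. *)

theory Defs
  imports "HOL-Analysis.Analysis"
begin

text \<open>The functionals kappa-star, defined by the recursion of the paper, for an algebra
  whose multiplication is given explicitly as m (so that it applies both to an abstract
  ring and to operators under composition). A list [a1,...,an] (n >= 1) is the argument
  tuple; the value at the empty list is an irrelevant default.\<close>
fun kstar_gen :: "('a \<Rightarrow> 'a \<Rightarrow> 'a) \<Rightarrow> ('a \<Rightarrow> 'k::comm_ring) \<Rightarrow> 'a list \<Rightarrow> 'k" where
  "kstar_gen m \<phi> [] = 0"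
| "kstar_gen m \<phi> [a] = \<phi> a"
| "kstar_gen m \<phi> (a # b # r) = kstar_gen m \<phi> (m a b # r) - \<phi> a * kstar_gen m \<phi> (b # r)"

abbreviation kstar :: "('a::ring_1 \<Rightarrow> 'k::comm_ring) \<Rightarrow> 'a list \<Rightarrow> 'k" where
  "kstar \<phi> \<equiv> kstar_gen (*) \<phi>"

text \<open>A unital complex algebra: a ring with a central unital ring homomorphism iota from the
  complex numbers (scalar multiplication c.a = iota c * a). phi is a complex-linear functional
  with phi 1 = 1.\<close>
definition unital_calg_state :: "(complex \<Rightarrow> 'a::ring_1) \<Rightarrow> ('a \<Rightarrow> complex) \<Rightarrow> bool" where
  "unital_calg_state \<iota> \<phi> \<longleftrightarrow>
     (\<forall>c d. \<iota> (c + d) = \<iota> c + \<iota> d) \<and> (\<forall>c d. \<iota> (c * d) = \<iota> c * \<iota> d) \<and> \<iota> 1 = 1 \<and>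
     (\<forall>c a. \<iota> c * a = a * \<iota> c) \<and>
     (\<forall>a b. \<phi> (a + b) = \<phi> a + \<phi> b) \<and> (\<forall>c a. \<phi> (\<iota> c * a) = c * \<phi> a) \<and>
     \<phi> 1 = 1"

text \<open>Complex Hilbert spaces are encoded as real Hilbert spaces with an orthogonal complex
  structure J (multiplication by i), J o J = -id.\<close>
definition complex_structure :: "('h::{real_inner,complete_space} \<Rightarrow> 'h) \<Rightarrow> bool" where
  "complex_structure J \<longleftrightarrow> linear J \<and> (\<forall>x. J (J x) = - x) \<and> (\<forall>x y. inner (J x) (J y) = inner x y)"

definition cinner :: "('h::real_inner \<Rightarrow> 'h) \<Rightarrow> 'h \<Rightarrow> 'h \<Rightarrow> complex" where
  "cinner J x y = Complex (inner x y) (inner x (J y))"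

definition BH :: "('h::real_normed_vector \<Rightarrow> 'h) \<Rightarrow> ('h \<Rightarrow> 'h) set" where
  "BH J = {a. bounded_linear a \<and> a \<circ> J = J \<circ> a}"

text \<open>Orthogonal projection onto the orthogonal complement of the complex line C xi
  (= real span of xi and J xi), for a unit vector xi: x - <x,xi> xi.\<close>
definition perp_proj :: "('h::real_inner \<Rightarrow> 'h) \<Rightarrow> 'h \<Rightarrow> 'h \<Rightarrow> 'h" where
  "perp_proj J \<xi> x = x - (inner x \<xi>) *\<^sub>R \<xi> - (inner x (J \<xi>)) *\<^sub>R J \<xi>"

fun alt_prod :: "('a \<Rightarrow> 'a \<Rightarrow> 'a) \<Rightarrow> 'a \<Rightarrow> 'a list \<Rightarrow> 'a" where
  "alt_prod m p [] = undefined"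
| "alt_prod m p [a] = a"
| "alt_prod m p (a # b # r) = m (m a p) (alt_prod m p (b # r))"

end

theory Submission
  imports Defs
begin

lemma kstar_split:
  assumes assoc: "\<And>x y z. m (m x y) z = m x (m y z)"
  shows "kstar_gen m \<phi> ((a#xs)@(y#ys)) =
    kstar_gen m \<phi> (butlast(a#xs) @ [m (last(a#xs)) y] @ ys)
    - kstar_gen m \<phi> (a#xs) * kstar_gen m \<phi> (y#ys)"
proof (induction xs arbitrary: a)
  case Nil
  then show ?case by simp
next
  case (Cons x xs)
  note IH1 = Cons.IH[of "m a x"] and IH2 = Cons.IH[of x]
  define B where "B = butlast(x#xs) @ [m (last(x#xs)) y] @ ys"
  obtain z w where zw: "B = z # w" by (cases B) (auto simp: B_def)
  have e1: "butlast (m a x # xs) @ [m (last (m a x # xs)) y] @ ys = m a z # w"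
    using zw unfolding B_def by (cases xs) (auto simp: assoc)
  have e2: "butlast (a # x # xs) @ [m (last (a # x # xs)) y] @ ys = a # z # w"
    using zw unfolding B_def by simp
  have F1: "kstar_gen m \<phi> ((a#x#xs)@y#ys) = kstar_gen m \<phi> ((m a x # xs)@y#ys) - \<phi> a * kstar_gen m \<phi> ((x#xs)@y#ys)"
    by simp
  have F3: "kstar_gen m \<phi> (a#x#xs) = kstar_gen m \<phi> (m a x # xs) - \<phi> a * kstar_gen m \<phi> (x#xs)"
    by simp
  have F2: "kstar_gen m \<phi> (a # z # w) = kstar_gen m \<phi> (m a z # w) - \<phi> a * kstar_gen m \<phi> (z#w)"
    by simp
  show ?case
    unfolding e2 F1 F2 F3 IH1 IH2 e1 B_def[symmetric] zw
    by (simp add: algebra_simps)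
qed

lemma part1:
  fixes as :: "'a::ring_1 list" and \<phi> :: "'a \<Rightarrow> 'k::comm_ring"
  assumes "1 \<le> k" "k \<le> n" "length as = n + 1"
  shows "kstar \<phi> as =
         kstar \<phi> (take (k - 1) as @ [as ! (k - 1) * as ! k] @ drop (k + 1) as)
         - kstar \<phi> (take k as) * kstar \<phi> (drop k as)"
proof -
  obtain a xs where tk: "take k as = a # xs"
    using assms by (cases "take k as") auto
  obtain y ys where dk: "drop k as = y # ys"
    using assms by (cases "drop k as") auto
  have as': "(a#xs) @ (y#ys) = as" using tk dk by (metis append_take_drop_id)
  have lk: "length (take k as) = k" using assms by simp
  have b1: "butlast (take k as) = take (k - 1) as" using assms by (simp add: butlast_take)
  have b2: "last (take k as) = as ! (k - 1)"
  proof -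
    have "take k as \<noteq> []" using tk by simp
    hence "last (take k as) = take k as ! (k - 1)" using lk by (simp add: last_conv_nth)
    also have "\<dots> = as ! (k - 1)" using assms by simp
    finally show ?thesis .
  qed
  have c1: "hd (drop k as) = as ! k" using assms by (simp add: hd_drop_conv_nth)
  have c2: "tl (drop k as) = drop (k+1) as" by (simp add: drop_Suc tl_drop)
  have b: "butlast (a#xs) = take (k - 1) as" "last (a#xs) = as ! (k - 1)"
    using b1 b2 tk by simp_all
  have c: "y = as ! k" "ys = drop (k+1) as" using c1 c2 dk by simp_all
  have K: "kstar \<phi> as = kstar \<phi> (butlast(a#xs) @ [last(a#xs) * y] @ ys)
     - kstar \<phi> (a#xs) * kstar \<phi> (y#ys)"
    using kstar_split[of "(*)" \<phi> a xs y ys] by (simp only: as' mult.assoc)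
  have X: "kstar \<phi> (take (k-1) as @ [as!(k-1)*as!k] @ drop(k+1) as) = kstar \<phi> (butlast(a#xs) @ [last(a#xs)*y] @ ys)"
    using b c by simp
  show ?thesis using K X tk dk by simp
qed

lemma inner_J:
  assumes "complex_structure J"
  shows "inner (J x) y = - inner x (J y)"
proof -
  have e: "inner (J x) (J (J y)) = inner x (J y)" using assms unfolding complex_structure_def by blast
  have "y = - J (J y)" using assms unfolding complex_structure_def by simp
  hence "inner (J x) y = inner (J x) (- J (J y))" by (rule arg_cong)
  also have "\<dots> = - inner (J x) (J (J y))" by (simp only: inner_minus_right)
  also have "\<dots> = - inner x (J y)" by (simp only: e)
  finally show ?thesis .
qed

lemma BH_comp: "a \<in> BH J \<Longrightarrow> b \<in> BH J \<Longrightarrow> a \<circ> b \<in> BH J"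
proof -
  assume a: "a \<in> BH J" and b: "b \<in> BH J"
  have ba: "bounded_linear a" "a \<circ> J = J \<circ> a" using a unfolding BH_def by simp_all
  have bb: "bounded_linear b" "b \<circ> J = J \<circ> b" using b unfolding BH_def by simp_all
  have "bounded_linear (a \<circ> b)" using bounded_linear_compose[OF ba(1) bb(1)] by (simp add: o_def)
  moreover have "(a \<circ> b) \<circ> J = J \<circ> (a \<circ> b)"
  proof -
    have "(a \<circ> b) \<circ> J = a \<circ> (b \<circ> J)" by (rule comp_assoc)
    also have "\<dots> = a \<circ> (J \<circ> b)" by (simp only: bb(2))
    also have "\<dots> = (a \<circ> J) \<circ> b" by (rule comp_assoc[symmetric])
    also have "\<dots> = (J \<circ> a) \<circ> b" by (simp only: ba(2))
    also have "\<dots> = J \<circ> (a \<circ> b)" by (rule comp_assoc)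
    finally show ?thesis .
  qed
  ultimately show ?thesis unfolding BH_def by simp
qed

lemma alt_comp: "alt_prod (\<circ>) p ((a \<circ> b) # r) = a \<circ> alt_prod (\<circ>) p (b # r)"
  by (cases r) (auto simp: comp_assoc)

lemma key:
  assumes J: "complex_structure J" and a: "a \<in> BH J"
  shows "cinner J (a (perp_proj J \<xi> y)) \<xi> = cinner J (a y) \<xi> - cinner J (a \<xi>) \<xi> * cinner J y \<xi>"
proof -
  have ba: "bounded_linear a" "a \<circ> J = J \<circ> a" using a unfolding BH_def by simp_all
  have la: "linear a" using ba(1) by (rule bounded_linear.linear)
  have "(a \<circ> J) \<xi> = (J \<circ> a) \<xi>" using ba(2) by (rule fun_cong)
  hence aJ: "a (J \<xi>) = J (a \<xi>)" by (simp only: comp_apply)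
  have ap: "a (perp_proj J \<xi> y) = a y - (inner y \<xi>) *\<^sub>R a \<xi> - (inner y (J \<xi>)) *\<^sub>R J (a \<xi>)"
    unfolding perp_proj_def by (simp only: linear_diff[OF la] linear_scale[OF la] aJ)
  have i1: "inner (J (a \<xi>)) \<xi> = - inner (a \<xi>) (J \<xi>)" using inner_J[OF J] .
  have i2: "inner (J (a \<xi>)) (J \<xi>) = inner (a \<xi>) \<xi>" using J unfolding complex_structure_def by blast
  define c where "c = inner y \<xi>"
  define d where "d = inner y (J \<xi>)"
  define p where "p = inner (a \<xi>) \<xi>"
  define q where "q = inner (a \<xi>) (J \<xi>)"
  define u where "u = inner (a y) \<xi>"
  define v where "v = inner (a y) (J \<xi>)"
  have L: "cinner J (a (perp_proj J \<xi> y)) \<xi> = Complex (u - c * p + d * q) (v - c * q - d * p)"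
    unfolding ap cinner_def c_def d_def p_def q_def u_def v_def
    by (simp only: inner_diff_left inner_scaleR_left i1 i2) (simp add: algebra_simps)
  have R: "cinner J (a y) \<xi> - cinner J (a \<xi>) \<xi> * cinner J y \<xi> = Complex u v - Complex p q * Complex c d"
    unfolding cinner_def c_def d_def p_def q_def u_def v_def ..
  show ?thesis unfolding L R by (simp add: complex_eq_iff algebra_simps)
qed

lemma part2g:
  assumes J: "complex_structure J"
  shows "as \<noteq> [] \<Longrightarrow> set as \<subseteq> BH J \<Longrightarrow>
    kstar_gen (\<circ>) (\<lambda>a. cinner J (a \<xi>) \<xi>) as = cinner J (alt_prod (\<circ>) (perp_proj J \<xi>) as \<xi>) \<xi>"
proof (induction "length as" arbitrary: as rule: less_induct)
  case less
  show ?case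
  proof (cases as)
    case Nil then show ?thesis using less by simp
  next
    case (Cons a t)
    show ?thesis
    proof (cases t)
      case Nil then show ?thesis using Cons by simp
    next
      case (Cons b r)
      note asd = \<open>as = a # t\<close>[unfolded Cons]
      have ab: "a \<circ> b \<in> BH J" using less(3) asd by (auto intro: BH_comp)
      have s2: "set ((a \<circ> b) # r) \<subseteq> BH J" using ab less(3) asd by simp
      have s2': "set (b # r) \<subseteq> BH J" using less(3) asd by simp
      have al: "alt_prod (\<circ>) (perp_proj J \<xi>) ((a \<circ> b) # r) \<xi> = a (alt_prod (\<circ>) (perp_proj J \<xi>) (b # r) \<xi>)"
        by (simp only: alt_comp comp_apply)
      have IH1: "kstar_gen (\<circ>) (\<lambda>a. cinner J (a \<xi>) \<xi>) ((a \<circ> b) # r) = cinner J (a (alt_prod (\<circ>) (perp_proj J \<xi>) (b # r) \<xi>)) \<xi>"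
        using less(1)[of "(a \<circ> b) # r"] asd s2 unfolding al by simp
      have IH2: "kstar_gen (\<circ>) (\<lambda>a. cinner J (a \<xi>) \<xi>) (b # r) = cinner J (alt_prod (\<circ>) (perp_proj J \<xi>) (b # r) \<xi>) \<xi>"
        using less(1)[of "b # r"] asd s2' by simp
      have aB: "a \<in> BH J" using less(3) asd by simp
      have d1: "kstar_gen (\<circ>) (\<lambda>a. cinner J (a \<xi>) \<xi>) (a#b#r) = kstar_gen (\<circ>) (\<lambda>a. cinner J (a \<xi>) \<xi>) ((a \<circ> b) # r) - cinner J (a \<xi>) \<xi> * kstar_gen (\<circ>) (\<lambda>a. cinner J (a \<xi>) \<xi>) (b#r)"
        by (simp only: kstar_gen.simps)
      have d2: "alt_prod (\<circ>) (perp_proj J \<xi>) (a#b#r) \<xi> = a (perp_proj J \<xi> (alt_prod (\<circ>) (perp_proj J \<xi>) (b#r) \<xi>))"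
        by (simp only: alt_prod.simps comp_apply)
      show ?thesis unfolding asd d1 d2 IH1 IH2 key[OF J aB] ..
    qed
  qed
qed

lemma part2:
  assumes J: "complex_structure J" and "as \<noteq> []" "set as \<subseteq> BH J"
  shows "kstar_gen (\<circ>) (\<lambda>a. cinner J (a \<xi>) \<xi>) as = cinner J (alt_prod (\<circ>) (perp_proj J \<xi>) as \<xi>) \<xi>"
  using part2g[OF J assms(2,3)] .

theorem mainTheorem10:
  shows "(\<forall>(\<iota> :: complex \<Rightarrow> 'a::ring_1) (\<phi> :: 'a \<Rightarrow> complex).
            unital_calg_state \<iota> \<phi> \<longrightarrow>
            (\<forall>n k (as :: 'a list). 1 \<le> n \<and> 1 \<le> k \<and> k \<le> n \<and> length as = n + 1 \<longrightarrow>
               kstar \<phi> as =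
                 kstar \<phi> (take (k - 1) as @ [as ! (k - 1) * as ! k] @ drop (k + 1) as)
                 - kstar \<phi> (take k as) * kstar \<phi> (drop k as)))
       \<and> (\<forall>(J :: 'h::{real_inner,complete_space} \<Rightarrow> 'h) (\<xi> :: 'h).
            complex_structure J \<and> norm \<xi> = 1 \<longrightarrow>
            (\<forall>as. 1 \<le> length as \<and> set as \<subseteq> BH J \<longrightarrow>
               kstar_gen (\<circ>) (\<lambda>a. cinner J (a \<xi>) \<xi>) as
                 = cinner J (alt_prod (\<circ>) (perp_proj J \<xi>) as \<xi>) \<xi>))"
proof (intro conjI allI impI)
  fix \<iota> :: "complex \<Rightarrow> 'a" and \<phi> :: "'a \<Rightarrow> complex" and n k and as :: "'a list"
  assume h: "1 \<le> n \<and> 1 \<le> k \<and> k \<le> n \<and> length as = n + 1"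
  have h1: "1 \<le> k" "k \<le> n" "length as = n + 1" using h by simp_all
  show "kstar \<phi> as =
                 kstar \<phi> (take (k - 1) as @ [as ! (k - 1) * as ! k] @ drop (k + 1) as)
                 - kstar \<phi> (take k as) * kstar \<phi> (drop k as)"
    by (rule part1[OF h1])
next
  fix J :: "'h \<Rightarrow> 'h" and \<xi> :: 'h and as :: "('h \<Rightarrow> 'h) list"
  assume h: "complex_structure J \<and> norm \<xi> = 1" "1 \<le> length as \<and> set as \<subseteq> BH J"
  have cs: "complex_structure J" using h(1) by (rule conjunct1)
  have s: "set as \<subseteq> BH J" using h(2) by (rule conjunct2)
  have l: "1 \<le> length as" using h(2) by (rule conjunct1)
  have ne: "as \<noteq> []" using l by (cases as) simp_all
  show "kstar_gen (\<circ>) (\<lambda>a. cinner J (a \<xi>) \<xi>) as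
                 = cinner J (alt_prod (\<circ>) (perp_proj J \<xi>) as \<xi>) \<xi>"
    by (rule part2[OF cs ne s])
qed

end
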